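(* Let $\mathcal{X}$ be a set, let $r:\mathcal{X}\to\mathbb{R}$ be a reward function, and let $p$ be a probability distribution on $\mathcal{X}$ (with $r$ measurable). Under the Bradley–Terry model, the preference probability of $i$ over $j$ is $P(i\succ j)=\frac{\exp(r(i))}{\exp(r(i))+\exp(r(j))}$. Consider the binary classifier whose positive-class probability is $$P(y=1\mid x)=\mathbb{E}_{j\sim p}\big[P(x\succ j)\big]=\mathbb{E}_{j\sim p}\left[\frac{\exp(r(x))}{\exp(r(x))+\exp(r(j))}\right],$$ and let $l(x)=\log\frac{P(y=1\mid x)}{1-P(y=1\mid x)}$ be its logit. Then for all $x_1,x_2\in\mathcal{X}$, $$r(x_1)>r(x_2)\iff l(x_1)>l(x_2).$$
   Context: The classifier is trained on preference data generated by the Bradley–Terry model, with preference pairs treated as binary classification data; this is modeled by identifying the probability that $x$ is classified positive with the expected probability that $x$ is preferred over a competitor $j$ drawn at random from $p$. *)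

theory Defs
  imports "HOL-Probability.Probability"
begin

definition bt_pref :: "('a \<Rightarrow> real) \<Rightarrow> 'a \<Rightarrow> 'a \<Rightarrow> real" where
  "bt_pref r i j = exp (r i) / (exp (r i) + exp (r j))"

definition pos_prob :: "'a measure \<Rightarrow> ('a \<Rightarrow> real) \<Rightarrow> 'a \<Rightarrow> real" where
  "pos_prob p r x = (\<integral>j. bt_pref r x j \<partial>p)"

definition logit_cls :: "'a measure \<Rightarrow> ('a \<Rightarrow> real) \<Rightarrow> 'a \<Rightarrow> real" where
  "logit_cls p r x = ln (pos_prob p r x / (1 - pos_prob p r x))"

end

theory Submission
  imports Defs
begin

lemma bt_bounds: "0 < bt_pref r x j" "bt_pref r x j < 1"
  unfolding bt_pref_def by (auto simp: divide_simps add_pos_pos)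

lemma bt_mono: "r a < r b \<Longrightarrow> bt_pref r a j < bt_pref r b j"
  unfolding bt_pref_def by (auto simp: divide_simps add_pos_pos algebra_simps)

lemma bt_int:
  assumes "prob_space p" "r \<in> borel_measurable p"
  shows "integrable p (bt_pref r x)"
proof -
  interpret prob_space p by fact
  have m: "bt_pref r x \<in> borel_measurable p"
    unfolding bt_pref_def using assms(2) by measurable
  show ?thesis
    apply (rule integrable_const_bound[where B=1])
    using m apply (intro AE_I2)
    subgoal for j using bt_bounds[of r x j] by simp
    using m by simp 
qed

lemma pos_bounds:
  assumes "prob_space p" "r \<in> borel_measurable p"
  shows "0 < pos_prob p r x" "pos_prob p r x < 1"
proof -
  interpret prob_space p by fact
  have ne: "emeasure p (space p) \<noteq> 0" using emeasure_space_1 by simp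
  have "integral\<^sup>L p (\<lambda>_. 0::real) < integral\<^sup>L p (bt_pref r x)"
    by (rule integral_less_AE_space) (auto simp: bt_int[OF assms] bt_bounds ne)
  then show "0 < pos_prob p r x" by (simp add: pos_prob_def)
  have "integral\<^sup>L p (bt_pref r x) < integral\<^sup>L p (\<lambda>_. 1::real)"
    by (rule integral_less_AE_space) (auto simp: bt_int[OF assms] bt_bounds ne)
  then show "pos_prob p r x < 1" by (simp add: pos_prob_def prob_space)
qed

lemma pos_mono:
  assumes "prob_space p" "r \<in> borel_measurable p" "r a < r b"
  shows "pos_prob p r a < pos_prob p r b"
proof -
  interpret prob_space p by fact
  have ne: "emeasure p (space p) \<noteq> 0" using emeasure_space_1 by simp
  have "integral\<^sup>L p (bt_pref r a) < integral\<^sup>L p (bt_pref r b)"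
    by (rule integral_less_AE_space) (auto simp: bt_int[OF assms(1,2)] ne intro: bt_mono[of r a b, OF assms(3)])
  then show ?thesis by (simp add: pos_prob_def)
qed

lemma logit_mono:
  fixes u v :: real
  assumes "0 < u" "u < 1" "0 < v" "v < 1" "u < v"
  shows "ln (u / (1 - u)) < ln (v / (1 - v))"
proof -
  have "u / (1 - u) < v / (1 - v)" using assms by (simp add: divide_simps algebra_simps)
  then show ?thesis using assms by (subst ln_less_cancel_iff) auto
qed

lemma logit_strict:
  assumes "prob_space p" "r \<in> borel_measurable p" "r a < r b"
  shows "logit_cls p r a < logit_cls p r b"
  unfolding logit_cls_def
  by (rule logit_mono) (auto simp: pos_bounds[OF assms(1,2)] pos_mono[OF assms])

theorem theorem3p1:
  fixes p :: "'a measure" and r :: "'a \<Rightarrow> real" and x1 x2 :: 'a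
  assumes "prob_space p"
    and "r \<in> borel_measurable p"
    and "x1 \<in> space p" and "x2 \<in> space p"
  shows "r x1 > r x2 \<longleftrightarrow> logit_cls p r x1 > logit_cls p r x2"
proof
  assume "r x1 > r x2" then show "logit_cls p r x1 > logit_cls p r x2"
    using logit_strict[OF assms(1,2)] by blast
next
  assume h: "logit_cls p r x1 > logit_cls p r x2"
  show "r x1 > r x2"
  proof (rule ccontr)
    assume "\<not> r x1 > r x2"
    then have "r x1 < r x2 \<or> r x1 = r x2" by linarith
    then show False
    proof
      assume "r x1 < r x2" then show False
        using logit_strict[OF assms(1,2)] h by fastforce
    next
      assume e: "r x1 = r x2"
      have "bt_pref r x1 = bt_pref r x2" by (rule ext) (simp add: bt_pref_def e)
      then show False using h by (simp add: logit_cls_def pos_prob_def)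
    qed
  qed
qed

end
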